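(* Let $r\ge 2$ and $n\ge1$ be integers, and for $k=0,1,\dots,n$ let $\boldsymbol{\lambda}_k=((n-k);(1^k);\emptyset;\dots;\emptyset)$. Then the number of standard $\boldsymbol{\lambda}_k$-tableaux is $\binom{n}{k}$, and every standard $\boldsymbol{\lambda}_k$-tableau has exactly $k$ descents.
   Context: An $r$-multipartition $\boldsymbol{\lambda}=(\lambda^{(0)};\dots;\lambda^{(r-1)})$ of $n$ is an $r$-tuple of partitions of total size $n$; here $\boldsymbol\lambda_k$ has a one-row component $(n-k)$ in position $0$, a one-column component $(1^k)$ in position $1$, and empty components otherwise. A standard $\boldsymbol{\lambda}$-tableau fills the boxes of all components with $1,\dots,n$, each once, increasing along rows and down columns in each component. An integer $i\in\{1,\dots,n-1\}$ is a descent of $\mathrm{T}$ if, with $i$ in row $a$ of component $c$ and $i+1$ in row $x$ of component $z$, either $c=z$ and $a<x$, or $c>z$; $n$ is a descent iff $n$ lies in a component $c>0$. *)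

theory Defs
  imports Main
begin

text \<open>A partition is a list of row lengths (weakly decreasing, positive);
an r-multipartition is a list of r partitions. A box is a triple
(component c, row a, column b), all indexed from 0.\<close>

type_synonym partition = "nat list"
type_synonym multipartition = "partition list"
type_synonym box = "nat \<times> nat \<times> nat"

definition boxes :: "multipartition \<Rightarrow> box set" where
  "boxes lam = {(c, a, b). c < length lam \<and> a < length (lam ! c) \<and> b < (lam ! c) ! a}"

text \<open>To make tableaux unique objects, the function is 0 outside the boxes.\<close>

definition standard_tableau :: "multipartition \<Rightarrow> nat \<Rightarrow> (box \<Rightarrow> nat) \<Rightarrow> bool" where
  "standard_tableau lam n T \<longleftrightarrow>
     bij_betw T (boxes lam) {1..n} \<and>
     (\<forall>x. x \<notin> boxes lam \<longrightarrow> T x = 0) \<and>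
     (\<forall>c a b. (c, a, b) \<in> boxes lam \<and> (c, a, Suc b) \<in> boxes lam \<longrightarrow> T (c, a, b) < T (c, a, Suc b)) \<and>
     (\<forall>c a b. (c, a, b) \<in> boxes lam \<and> (c, Suc a, b) \<in> boxes lam \<longrightarrow> T (c, a, b) < T (c, Suc a, b))"

definition box_of :: "multipartition \<Rightarrow> (box \<Rightarrow> nat) \<Rightarrow> nat \<Rightarrow> box" where
  "box_of lam T i = the_inv_into (boxes lam) T i"

definition comp_of :: "multipartition \<Rightarrow> (box \<Rightarrow> nat) \<Rightarrow> nat \<Rightarrow> nat" where
  "comp_of lam T i = fst (box_of lam T i)"

definition row_of :: "multipartition \<Rightarrow> (box \<Rightarrow> nat) \<Rightarrow> nat \<Rightarrow> nat" where
  "row_of lam T i = fst (snd (box_of lam T i))"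

definition descents :: "multipartition \<Rightarrow> nat \<Rightarrow> (box \<Rightarrow> nat) \<Rightarrow> nat set" where
  "descents lam n T =
     {i \<in> {1..<n}. (comp_of lam T i = comp_of lam T (Suc i) \<and> row_of lam T i < row_of lam T (Suc i))
                   \<or> comp_of lam T i > comp_of lam T (Suc i)}
     \<union> {i. i = n \<and> comp_of lam T n > 0}"

definition hook_multipartition :: "nat \<Rightarrow> nat \<Rightarrow> nat \<Rightarrow> multipartition" where
  "hook_multipartition r n k =
     (if n - k = 0 then [] else [n - k]) # replicate k 1 # replicate (r - 2) []"

end

theory Submission
  imports Defs
begin

lemma step_mono:
  assumes "\<forall>a. Suc a < m \<longrightarrow> f a < (f (Suc a)::nat)" "a < b" "b < m"
  shows "f a < f b"
  using assms(2,3)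
proof (induction b)
  case 0 then show ?case by simp
next
  case (Suc b)
  then show ?case using assms(1) by (metis less_SucE less_trans Suc_lessD)
qed

lemma sorted_char:
  assumes "\<forall>a. Suc a < m \<longrightarrow> f a < (f (Suc a)::nat)" "a < m"
  shows "f a = sorted_list_of_set (f ` {..<m}) ! a"
proof -
  let ?xs = "map f [0..<m]"
  have s: "sorted_wrt (<) ?xs"
    unfolding sorted_wrt_iff_nth_less using step_mono[OF assms(1)] by auto
  have st: "set ?xs = f ` {..<m}" by auto
  have "sorted_list_of_set (f ` {..<m}) = ?xs"
    by (rule strict_sorted_equal[OF s]) (auto simp: st)
  then show ?thesis using assms(2) by simp
qed

lemma boxes_hook:
  assumes "2 \<le> r"
  shows "(c,a,b) \<in> boxes (hook_multipartition r n k) \<longleftrightarrow>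
         (c=0 \<and> a=0 \<and> b<n-k) \<or> (c=1 \<and> a<k \<and> b=0)"
proof (cases c)
  case 0 then show ?thesis by (auto simp: boxes_def hook_multipartition_def)
next
  case (Suc c')
  then show ?thesis using assms
    by (cases c') (auto simp: boxes_def hook_multipartition_def nth_Cons)
qed


context
  fixes r n k :: nat
  assumes r2: "2 \<le> r"
begin

abbreviation "lam \<equiv> hook_multipartition r n k"
abbreviation "C0 \<equiv> (\<lambda>b. (0::nat,0::nat,b)) ` {..<n-k}"
abbreviation "C1 \<equiv> (\<lambda>a. (1::nat,a,0::nat)) ` {..<k}"

lemma B_eq: "boxes lam = C0 \<union> C1"
proof (rule set_eqI)
  fix x :: box
  obtain c a b where x: "x = (c,a,b)" by (cases x) auto
  show "x \<in> boxes lam \<longleftrightarrow> x \<in> C0 \<union> C1"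
    unfolding x boxes_hook[OF r2] by auto
qed

lemma C01_disj: "C0 \<inter> C1 = {}" by auto

lemma tab_props:
  assumes "standard_tableau lam n T"
  shows "bij_betw T (boxes lam) {1..n}"
    "\<forall>x. x \<notin> boxes lam \<longrightarrow> T x = 0"
    "\<forall>b. Suc b < n-k \<longrightarrow> T (0,0,b) < T (0,0,Suc b)"
    "\<forall>a. Suc a < k \<longrightarrow> T (1,a,0) < T (1,Suc a,0)"
  using assms unfolding standard_tableau_def by (auto simp: boxes_hook[OF r2])

lemma img_C1: "T ` C1 = (\<lambda>a. T (1,a,0)) ` {..<k}" by (auto simp: image_image)
lemma img_C0: "T ` C0 = (\<lambda>b. T (0,0,b)) ` {..<n-k}" by (auto simp: image_image)

lemma img_C0_compl:
  assumes "standard_tableau lam n T"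
  shows "T ` C0 = {1..n} - T ` C1"
proof -
  have bij: "bij_betw T (C0 \<union> C1) {1..n}" using tab_props(1)[OF assms] B_eq by simp
  then have "T ` (C0 \<union> C1) = {1..n}" "inj_on T (C0 \<union> C1)" by (auto simp: bij_betw_def)
  moreover have "T ` C0 \<inter> T ` C1 = {}"
    using inj_on_image_Int[OF \<open>inj_on T (C0 \<union> C1)\<close>, of C0 C1] C01_disj by auto
  ultimately show ?thesis by (auto simp: image_Un)
qed

lemma tab_inj:
  assumes "standard_tableau lam n T1" "standard_tableau lam n T2" "T1 ` C1 = T2 ` C1"
  shows "T1 = T2"
proof (rule ext)
  fix x :: box
  have c0: "T1 ` C0 = T2 ` C0" using img_C0_compl assms by simp
  show "T1 x = T2 x"
  proof (cases "x \<in> boxes lam")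
    case False then show ?thesis using tab_props(2)[OF assms(1)] tab_props(2)[OF assms(2)] by metis
  next
    case True
    then have "x \<in> C0 \<or> x \<in> C1" using B_eq by auto
    then show ?thesis
    proof
      assume "x \<in> C0"
      then obtain b where x: "x = (0,0,b)" "b < n-k" by auto
      have "T1 (0,0,b) = sorted_list_of_set ((\<lambda>b. T1 (0,0,b)) ` {..<n-k}) ! b"
        by (rule sorted_char[where f="\<lambda>b. T1 (0,0,b)"]) (use tab_props(3)[OF assms(1)] x in auto)
      moreover have "T2 (0,0,b) = sorted_list_of_set ((\<lambda>b. T2 (0,0,b)) ` {..<n-k}) ! b"
        by (rule sorted_char[where f="\<lambda>b. T2 (0,0,b)"]) (use tab_props(3)[OF assms(2)] x in auto)
      moreover have "(\<lambda>b. T1 (0,0,b)) ` {..<n-k} = (\<lambda>b. T2 (0,0,b)) ` {..<n-k}"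
        using c0 img_C0 by metis
      ultimately show ?thesis using x by simp
    next
      assume "x \<in> C1"
      then obtain a where x: "x = (1,a,0)" "a < k" by auto
      have "T1 (1,a,0) = sorted_list_of_set ((\<lambda>a. T1 (1,a,0)) ` {..<k}) ! a"
        by (rule sorted_char[where f="\<lambda>a. T1 (1,a,0)"]) (use tab_props(4)[OF assms(1)] x in auto)
      moreover have "T2 (1,a,0) = sorted_list_of_set ((\<lambda>a. T2 (1,a,0)) ` {..<k}) ! a"
        by (rule sorted_char[where f="\<lambda>a. T2 (1,a,0)"]) (use tab_props(4)[OF assms(2)] x in auto)
      moreover have "(\<lambda>a. T1 (1,a,0)) ` {..<k} = (\<lambda>a. T2 (1,a,0)) ` {..<k}"
        using assms(3) img_C1 by metis
      ultimately show ?thesis using x by simp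
    qed
  qed
qed

lemma card_C1:
  assumes "standard_tableau lam n T"
  shows "card (T ` C1) = k" "T ` C1 \<subseteq> {1..n}"
proof -
  have bij: "bij_betw T (C0 \<union> C1) {1..n}" using tab_props(1)[OF assms] B_eq by simp
  then have "inj_on T C1" by (auto simp: bij_betw_def intro: inj_on_subset)
  moreover have "card C1 = k" by (subst card_image) (auto simp: inj_on_def)
  ultimately show "card (T ` C1) = k" by (simp add: card_image)
  show "T ` C1 \<subseteq> {1..n}" using bij by (auto simp: bij_betw_def)
qed

lemma construct:
  assumes S: "S \<subseteq> {1..n}" "card S = k"
  shows "\<exists>T. standard_tableau lam n T \<and> T ` C1 = S"
proof -
  define xs where "xs = sorted_list_of_set S"
  define ys where "ys = sorted_list_of_set ({1..n} - S)"
  have fS: "finite S" using S finite_subset by blast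
  have xs: "length xs = k" "set xs = S" "sorted_wrt (<) xs" "distinct xs"
    using fS S by (auto simp: xs_def)
  have "card ({1..n} - S) = n - k" using S fS by (simp add: card_Diff_subset)
  then have ys: "length ys = n - k" "set ys = {1..n} - S" "sorted_wrt (<) ys" "distinct ys"
    by (auto simp: ys_def)
  define T where "T = (\<lambda>(c::nat,a::nat,b::nat). if c = 1 \<and> a < k \<and> b = 0 then xs!a
                    else if c = 0 \<and> a = 0 \<and> b < n-k then ys!b else 0)"
  have T1: "T ` C1 = S"
  proof -
    have "T ` C1 = (\<lambda>a. xs ! a) ` {..<k}" by (auto simp: T_def image_image)
    also have "\<dots> = set xs" using xs(1) by (auto simp: set_conv_nth)
    finally show ?thesis using xs(2) by simp
  qed
  have T0: "T ` C0 = {1..n} - S"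
  proof -
    have "T ` C0 = (\<lambda>b. ys ! b) ` {..<n-k}" by (auto simp: T_def image_image)
    also have "\<dots> = set ys" using ys(1) by (auto simp: set_conv_nth)
    finally show ?thesis using ys(2) by simp
  qed
  have injC1: "inj_on T C1"
  proof (rule inj_onI)
    fix x y assume "x \<in> C1" "y \<in> C1" "T x = T y"
    then obtain a a' where "x = (1,a,0)" "y = (1,a',0)" "a < k" "a' < k" "xs ! a = xs ! a'"
      by (auto simp: T_def)
    then show "x = y" using xs(1,4) nth_eq_iff_index_eq by metis
  qed
  have injC0: "inj_on T C0"
  proof (rule inj_onI)
    fix x y assume "x \<in> C0" "y \<in> C0" "T x = T y"
    then obtain a a' where "x = (0,0,a)" "y = (0,0,a')" "a < n-k" "a' < n-k" "ys ! a = ys ! a'"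
      by (auto simp: T_def)
    then show "x = y" using ys(1,4) nth_eq_iff_index_eq by metis
  qed
  have "inj_on T (C0 \<union> C1)"
  proof -
    have "T ` (C0 - C1) \<inter> T ` (C1 - C0) = {}"
    proof -
      have "T ` (C0 - C1) \<subseteq> {1..n} - S" using T0 by blast
      moreover have "T ` (C1 - C0) \<subseteq> S" using T1 by blast
      ultimately show ?thesis by blast
    qed
    then show ?thesis using injC0 injC1 by (simp add: inj_on_Un)
  qed
  moreover have "T ` (C0 \<union> C1) = {1..n}" unfolding image_Un T0 T1 using S by blast
  ultimately have bij: "bij_betw T (boxes lam) {1..n}" using B_eq by (simp add: bij_betw_def)
  have "standard_tableau lam n T"
    unfolding standard_tableau_def
  proof (intro conjI bij allI impI)
    fix x assume x: "x \<notin> boxes lam"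
    obtain c a b where "x = (c,a,b)" by (cases x) auto
    then show "T x = 0" using x by (auto simp: T_def boxes_hook[OF r2])
  next
    fix c a b assume "(c, a, b) \<in> boxes lam \<and> (c, a, Suc b) \<in> boxes lam"
    then have "c = 0" "a = 0" "Suc b < n - k" by (auto simp: boxes_hook[OF r2])
    then show "T (c, a, b) < T (c, a, Suc b)"
      using ys(1,3) by (auto simp: T_def sorted_wrt_iff_nth_less)
  next
    fix c a b assume "(c, a, b) \<in> boxes lam \<and> (c, Suc a, b) \<in> boxes lam"
    then have "c = 1" "b = 0" "Suc a < k" by (auto simp: boxes_hook[OF r2])
    then show "T (c, a, b) < T (c, Suc a, b)"
      using xs(1,3) by (auto simp: T_def sorted_wrt_iff_nth_less)
  qed
  then show ?thesis using T1 by blast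
qed

lemma count: "card {T. standard_tableau lam n T} = n choose k"
proof -
  have "bij_betw (\<lambda>T. T ` C1) {T. standard_tableau lam n T} {S. S \<subseteq> {1..n} \<and> card S = k}"
    unfolding bij_betw_def
  proof
    show "inj_on (\<lambda>T. T ` C1) {T. standard_tableau lam n T}"
    proof (rule inj_onI)
      fix T1 T2 assume "T1 \<in> {T. standard_tableau lam n T}" "T2 \<in> {T. standard_tableau lam n T}"
        "T1 ` C1 = T2 ` C1"
      then show "T1 = T2" using tab_inj[of T1 T2] by simp
    qed
    show "(\<lambda>T. T ` C1) ` {T. standard_tableau lam n T} = {S. S \<subseteq> {1..n} \<and> card S = k}"
    proof (rule set_eqI, rule iffI)
      fix S assume "S \<in> (\<lambda>T. T ` C1) ` {T. standard_tableau lam n T}"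
      then obtain T where T: "standard_tableau lam n T" "S = T ` C1" by (auto simp only: image_iff mem_Collect_eq)
      show "S \<in> {S. S \<subseteq> {1..n} \<and> card S = k}" using card_C1[OF T(1)] T(2) by simp
    next
      fix S assume "S \<in> {S. S \<subseteq> {1..n} \<and> card S = k}"
      then have "S \<subseteq> {1..n}" "card S = k" by simp_all
      from construct[OF this] obtain T where T: "standard_tableau lam n T" "T ` C1 = S" by blast
      show "S \<in> (\<lambda>T. T ` C1) ` {T. standard_tableau lam n T}" using T by (intro image_eqI[of _ _ T]) auto
    qed
  qed
  then have "card {T. standard_tableau lam n T} = card {S. S \<subseteq> {1..n} \<and> card S = k}"
    by (rule bij_betw_same_card)
  also have "\<dots> = n choose k" by (subst n_subsets) auto
  finally show ?thesis .
qed

lemma desc: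
  assumes n1: "1 \<le> n" and st: "standard_tableau lam n T"
  shows "descents lam n T = T ` C1"
proof -
  define S where "S = T ` C1"
  have bij: "bij_betw T (boxes lam) {1..n}" using tab_props(1)[OF st] .
  have bo: "box_of lam T i \<in> boxes lam \<and> T (box_of lam T i) = i" if "i \<in> {1..n}" for i
    using bij that unfolding box_of_def
    by (metis bij_betw_apply bij_betw_the_inv_into f_the_inv_into_f_bij_betw)
  have Ssub: "S \<subseteq> {1..n}" using card_C1(2)[OF st] S_def by simp
  have C0c: "T ` C0 = {1..n} - S" using img_C0_compl[OF st] S_def by simp
  have in1: "\<exists>a<k. box_of lam T i = (1,a,0)" if "i \<in> S" for i
  proof -
    have i: "i \<in> {1..n}" using that Ssub by blast
    have "box_of lam T i \<in> C0 \<or> box_of lam T i \<in> C1" using bo[OF i] B_eq by auto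
    moreover have "box_of lam T i \<notin> C0"
    proof
      assume "box_of lam T i \<in> C0"
      then have "T (box_of lam T i) \<in> T ` C0" by blast
      then show False using bo[OF i] C0c that by auto
    qed
    ultimately show ?thesis by auto
  qed
  have in0: "\<exists>b<n-k. box_of lam T i = (0,0,b)" if "i \<notin> S" "i \<in> {1..n}" for i
  proof -
    have "box_of lam T i \<in> C0 \<or> box_of lam T i \<in> C1" using bo[OF that(2)] B_eq by auto
    moreover have "box_of lam T i \<notin> C1"
    proof
      assume "box_of lam T i \<in> C1"
      then have "T (box_of lam T i) \<in> S" unfolding S_def by blast
      then show False using bo[OF that(2)] that(1) by auto
    qed
    ultimately show ?thesis by auto
  qed
  have c1: "comp_of lam T i = 1" if "i \<in> S" for i
    using in1[OF that] by (auto simp: comp_of_def)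
  have c0: "comp_of lam T i = 0 \<and> row_of lam T i = 0" if "i \<notin> S" "i \<in> {1..n}" for i
    using in0[OF that] by (auto simp: comp_of_def row_of_def)
  have mono: "\<forall>a. Suc a < k \<longrightarrow> T (1,a,0) < T (1,Suc a,0)" using tab_props(4)[OF st] .
  show ?thesis unfolding S_def[symmetric]
  proof (rule set_eqI, rule iffI)
    fix i assume d: "i \<in> descents lam n T"
    show "i \<in> S"
    proof (rule ccontr)
      assume nS: "i \<notin> S"
      from d consider (a) "i \<in> {1..<n}"
          "(comp_of lam T i = comp_of lam T (Suc i) \<and> row_of lam T i < row_of lam T (Suc i))
           \<or> comp_of lam T i > comp_of lam T (Suc i)"
        | (b) "i = n" "comp_of lam T n > 0"
        unfolding descents_def by auto
      then show False
      proof cases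
        case a
        then have i: "i \<in> {1..n}" "Suc i \<in> {1..n}" by auto
        show False
        proof (cases "Suc i \<in> S")
          case True then show False using a c0[OF nS i(1)] c1[OF True] by auto
        next
          case False then show False using a c0[OF nS i(1)] c0[OF False i(2)] by auto
        qed
      next
        case b
        then show False using c0[OF nS] n1 by auto
      qed
    qed
  next
    fix i assume iS: "i \<in> S"
    have i: "i \<in> {1..n}" using iS Ssub by blast
    show "i \<in> descents lam n T"
    proof (cases "i = n")
      case True then show ?thesis using c1[OF iS] by (auto simp: descents_def)
    next
      case False
      then have i1: "i \<in> {1..<n}" "Suc i \<in> {1..n}" using i by auto
      show ?thesis
      proof (cases "Suc i \<in> S")
        case False then show ?thesis using i1 c1[OF iS] c0[OF False i1(2)] by (auto simp: descents_def)
      next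
        case True
        obtain a where a: "a < k" "box_of lam T i = (1,a,0)" using in1[OF iS] by blast
        obtain a' where a': "a' < k" "box_of lam T (Suc i) = (1,a',0)" using in1[OF True] by blast
        have Ta: "T (1,a,0) = i" using bo[OF i] a by simp
        have Ta': "T (1,a',0) = Suc i" using bo[OF i1(2)] a' by simp
        have "a < a'"
        proof (rule ccontr)
          assume "\<not> a < a'"
          then have "a' = a \<or> a' < a" by auto
          then show False
          proof
            assume "a' = a" then show False using Ta Ta' by simp
          next
            assume "a' < a"
            then have "T (1,a',0) < T (1,a,0)"
              using step_mono[where f="\<lambda>a. T (1,a,0)", OF mono] a by blast
            then show False using Ta Ta' by simp
          qed
        qed
        then show ?thesis using i1 a a' c1[OF iS] c1[OF True]
          by (auto simp: descents_def row_of_def comp_of_def)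
      qed
    qed
  qed
qed

end

theorem mainTheorem3:
  fixes r n k :: nat
  assumes "r \<ge> 2" and "n \<ge> 1" and "k \<le> n"
  shows "card {T. standard_tableau (hook_multipartition r n k) n T} = n choose k
       \<and> (\<forall>T. standard_tableau (hook_multipartition r n k) n T \<longrightarrow>
              card (descents (hook_multipartition r n k) n T) = k)"
  using count[OF assms(1)] desc[OF assms(1) assms(2)] card_C1(1)[OF assms(1)] by simp

end
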